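(* Let $(V_i)_{i\ge0}$ be a sequence of non-negative integers with $V_i-1\le V_{i+1}\le V_i$ for all $i$. Suppose $\rho=(\rho_1,\dots,\rho_t)\in\mathbb{Z}^t$ has non-negative entries, set $n=\|\rho\|=\sum\rho_i^2$, and suppose that for all integers $0\le k\le n/2$, $$8V_k=\min\{\|c\|-t:\ c\in\mathrm{Char}(\mathbb{Z}^t),\ |c\cdot\rho|=n-2k\}.$$ Then the entries $\rho_i$ with $\rho_i\ge2$ (as a multiset) are determined by the sequence $(V_i)_{i\ge0}$; in particular they are independent of $n$ and $t$.
   Context: $\mathbb{Z}^t$ carries the standard inner product, $\|c\|=c\cdot c$, and $\mathrm{Char}(\mathbb{Z}^t)$ is the set of vectors all of whose coordinates are odd. *)

theory Defs
  imports Main "HOL-Library.Multiset"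
begin

text \<open>Vectors in Z^t are represented as int lists of length t.\<close>

definition ip :: "int list \<Rightarrow> int list \<Rightarrow> int" where
  "ip c r = sum_list (map (\<lambda>(x, y). x * y) (zip c r))"

definition sqn :: "int list \<Rightarrow> int" where
  "sqn c = ip c c"

definition Char :: "nat \<Rightarrow> int list set" where
  "Char t = {c. length c = t \<and> (\<forall>x\<in>set c. odd x)}"

definition is_min_of :: "int \<Rightarrow> int set \<Rightarrow> bool" where
  "is_min_of m S \<longleftrightarrow> m \<in> S \<and> (\<forall>y\<in>S. m \<le> y)"

definition realizes :: "(nat \<Rightarrow> nat) \<Rightarrow> int list \<Rightarrow> bool" where
  "realizes V \<rho> \<longleftrightarrow>
     (\<forall>x\<in>set \<rho>. 0 \<le> x) \<and>
     (\<forall>k::nat. 2 * int k \<le> sqn \<rho> \<longrightarrow>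
        is_min_of (8 * int (V k))
          {sqn c - int (length \<rho>) | c. c \<in> Char (length \<rho>) \<and>
                                         \<bar>ip c \<rho>\<bar> = sqn \<rho> - 2 * int k})"

end

theory Submission
  imports Defs Complex_Main
begin

definition psi :: "real \<Rightarrow> real" where
  "psi \<mu> = of_int \<lfloor>\<mu>\<rfloor> * (of_int \<lfloor>\<mu>\<rfloor> + 1) / 2 - \<mu> * of_int \<lfloor>\<mu>\<rfloor>"

lemma ip_Cons[simp]: "ip (a#c) (b#r) = a*b + ip c r" by (simp add: ip_def)
lemma ip_Nil[simp]: "ip [] r = 0" by (simp add: ip_def)
lemma sqn_Cons[simp]: "sqn (a#c) = a*a + sqn c" by (simp add: sqn_def)
lemma sqn_Nil[simp]: "sqn [] = 0" by (simp add: sqn_def)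

lemma coord:
  fixes c :: int and \<mu> :: real assumes "odd c"
  shows "(of_int (c*c) - 1)/8 - \<mu>*(of_int c - 1)/2 \<ge> psi \<mu>"
proof -
  obtain x where c: "c = 2*x+1" using assms by (metis oddE)
  define j where "j = \<lfloor>\<mu>\<rfloor>"
  have j1: "of_int j \<le> \<mu>" "\<mu> < of_int j + 1" unfolding j_def by linarith+
  have eq: "(of_int (c*c) - 1)/8 - \<mu>*(of_int c - 1)/2 - psi \<mu>
      = (of_int x - of_int j) * ((of_int x + of_int j + 1)/2 - \<mu>)"
    unfolding psi_def c j_def[symmetric] by (simp add: field_simps)
  have "(of_int x - of_int j) * ((of_int x + of_int j + 1)/2 - \<mu>) \<ge> (0::real)"
  proof (cases "x \<ge> j + 1")
    case True
    hence "real_of_int x \<ge> of_int j + 1" by linarith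
    thus ?thesis using j1 by (intro mult_nonneg_nonneg) auto
  next
    case False
    show ?thesis
    proof (cases "x = j")
      case True thus ?thesis by simp
    next
      case False
      with \<open>\<not> x \<ge> j+1\<close> have "real_of_int x \<le> of_int j - 1" by linarith
      thus ?thesis using j1 by (intro mult_nonpos_nonpos) auto
    qed
  qed
  with eq show ?thesis by linarith
qed

lemma list_lb:
  assumes "length c = length \<rho>" "\<forall>x\<in>set c. odd x"
  shows "(of_int (sqn c) - of_nat (length \<rho>))/8 - l*(of_int (ip c \<rho>) - of_int (sum_list \<rho>))/2
     \<ge> sum_list (map (\<lambda>r. psi (l * of_int r)) \<rho>)"
  using assms
proof (induction c \<rho> rule: list_induct2)
  case Nil thus ?case by simp
next
  case (Cons a c b r)
  have "(of_int (a*a) - 1)/8 - (l*of_int b)*(of_int a - 1)/2 \<ge> psi (l*of_int b)"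
    using coord Cons.prems by auto
  moreover have "(of_int (sqn c) - of_nat (length r))/8 - l*(of_int (ip c r) - of_int (sum_list r))/2
     \<ge> sum_list (map (\<lambda>r. psi (l * of_int r)) r)" using Cons by auto
  ultimately show ?case using Cons.hyps by (simp add: algebra_simps add_divide_distrib diff_divide_distrib)
qed

lemma list_eq:
  shows "(of_int (sqn (map (\<lambda>r. 2*\<lfloor>l*of_int r\<rfloor>+1) \<rho>)) - of_nat (length \<rho>))/8
     - l*(of_int (ip (map (\<lambda>r. 2*\<lfloor>l*of_int r\<rfloor>+1) \<rho>) \<rho>) - of_int (sum_list \<rho>))/2
     = sum_list (map (\<lambda>r. psi (l * of_int r)) \<rho>)"
proof (induction \<rho>)
  case Nil thus ?case by simp
next
  case (Cons b r)
  show ?case using Cons unfolding psi_def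
    by (simp add: algebra_simps add_divide_distrib diff_divide_distrib)
qed

definition Nn :: "int list \<Rightarrow> int" where
  "Nn \<rho> = sum_list (map (\<lambda>r. r*(r-1) div 2) \<rho>)"

lemma Nn_eq: "2 * Nn \<rho> = sqn \<rho> - sum_list \<rho>"
proof (induction \<rho>)
  case Nil thus ?case by (simp add: Nn_def)
next
  case (Cons a r)
  have "even (a*(a-1))" by simp
  hence "2 * (a*(a-1) div 2) = a*a - a" by (simp add: algebra_simps)
  thus ?case using Cons by (simp add: Nn_def algebra_simps)
qed

lemma sum_nonneg_list: "\<forall>x\<in>set \<rho>. 0 \<le> x \<Longrightarrow> 0 \<le> sum_list (\<rho>::int list)"
  by (induction \<rho>) auto

lemma Nn_nonneg: "\<forall>x\<in>set \<rho>. 0 \<le> x \<Longrightarrow> 0 \<le> Nn \<rho>"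
  unfolding Nn_def
proof (induction \<rho>)
  case Nil thus ?case by simp
next
  case (Cons a r)
  have "0 \<le> a" using Cons.prems by simp
  hence "0 \<le> a*(a-1)" by (cases "a = 0") auto
  hence "0 \<le> a*(a-1) div 2" by simp
  thus ?case using Cons by simp
qed

lemma ip_neg: "ip (map uminus c) r = - ip c r"
proof (induction c arbitrary: r)
  case Nil thus ?case by simp
next
  case (Cons a c r) thus ?case by (cases r) (auto simp: ip_def)
qed

lemma sqn_neg: "sqn (map uminus c) = sqn c"
  by (induction c) auto

lemma ip_rep: "ip (replicate (length r) 1) r = sum_list r"
  by (induction r) auto

lemma sqn_rep: "sqn (replicate n 1) = int n"
  by (induction n) auto

lemma sqn_ge: "\<forall>x\<in>set c. odd x \<Longrightarrow> sqn c \<ge> int (length c) \<and> (sqn c = int (length c) \<longrightarrow> (\<forall>x\<in>set c. x*x = 1))"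
proof (induction c)
  case Nil thus ?case by simp
next
  case (Cons a c)
  have "a \<noteq> 0" using Cons.prems by auto
  hence "0 < a*a" by (simp add: zero_less_mult_iff linorder_neq_iff) blast
  hence "a*a \<ge> 1" by simp
  thus ?case using Cons by auto
qed

lemma ip_unit: "length c = length \<rho> \<Longrightarrow> \<forall>x\<in>set c. x*x = 1 \<Longrightarrow> \<forall>x\<in>set \<rho>. 0 \<le> x \<Longrightarrow> \<bar>ip c \<rho>\<bar> \<le> sum_list \<rho>"
proof (induction c \<rho> rule: list_induct2)
  case Nil thus ?case by simp
next
  case (Cons a c b r)
  have "a = 1 \<or> a = -1" using Cons.prems(1) by (simp add: zmult_eq_1_iff)
  hence "\<bar>a*b\<bar> \<le> b" using Cons.prems by auto
  thus ?case using Cons by auto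
qed

lemma realizesD:
  assumes "realizes V \<rho>" "2 * int k \<le> sqn \<rho>"
  shows "\<exists>c\<in>Char (length \<rho>). \<bar>ip c \<rho>\<bar> = sqn \<rho> - 2 * int k \<and> 8 * int (V k) = sqn c - int (length \<rho>)"
    "\<And>c. c \<in> Char (length \<rho>) \<Longrightarrow> \<bar>ip c \<rho>\<bar> = sqn \<rho> - 2 * int k \<Longrightarrow> 8 * int (V k) \<le> sqn c - int (length \<rho>)"
  using assms unfolding realizes_def is_min_of_def by blast+

lemma V_at_N:
  assumes "realizes V \<rho>"
  shows "V (nat (Nn \<rho>)) = 0"
proof -
  have nn: "\<forall>x\<in>set \<rho>. 0 \<le> x" using assms realizes_def by blast
  have N0: "0 \<le> Nn \<rho>" using Nn_nonneg[OF nn] .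
  have s0: "0 \<le> sum_list \<rho>" using sum_nonneg_list[OF nn] .
  have k: "2 * int (nat (Nn \<rho>)) \<le> sqn \<rho>" using N0 s0 Nn_eq[of \<rho>] by simp
  have c: "replicate (length \<rho>) 1 \<in> Char (length \<rho>)" by (simp add: Char_def)
  have "\<bar>ip (replicate (length \<rho>) 1) \<rho>\<bar> = sqn \<rho> - 2 * int (nat (Nn \<rho>))"
    using ip_rep[of \<rho>] N0 s0 Nn_eq[of \<rho>] by simp
  from realizesD(2)[OF assms k c this] show ?thesis by (simp add: sqn_rep)
qed

lemma V_pos:
  assumes "realizes V \<rho>" "int k < Nn \<rho>"
  shows "V k > 0"
proof (rule ccontr)
  assume "\<not> V k > 0" hence V0: "V k = 0" by simp
  have nn: "\<forall>x\<in>set \<rho>. 0 \<le> x" using assms realizes_def by blast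
  have s0: "0 \<le> sum_list \<rho>" using sum_nonneg_list[OF nn] .
  have k: "2 * int k \<le> sqn \<rho>" using assms(2) s0 Nn_eq[of \<rho>] by simp
  obtain c where c: "c \<in> Char (length \<rho>)" "\<bar>ip c \<rho>\<bar> = sqn \<rho> - 2 * int k"
    "8 * int (V k) = sqn c - int (length \<rho>)" using realizesD(1)[OF assms(1) k] by blast
  have lc: "length c = length \<rho>" "\<forall>x\<in>set c. odd x" using c(1) by (auto simp: Char_def)
  have "sqn c = int (length c)" using c(3) V0 lc by simp
  hence "\<forall>x\<in>set c. x*x = 1" using sqn_ge[OF lc(2)] by blast
  hence "\<bar>ip c \<rho>\<bar> \<le> sum_list \<rho>" using ip_unit lc nn by blast
  thus False using c(2) assms(2) Nn_eq[of \<rho>] by simp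
qed

lemma N_eq:
  assumes "realizes V \<rho>" "realizes V \<rho>'"
  shows "Nn \<rho> = Nn \<rho>'"
proof -
  have a: "0 \<le> Nn \<rho>" using assms(1) Nn_nonneg realizes_def by blast
  have b: "0 \<le> Nn \<rho>'" using assms(2) Nn_nonneg realizes_def by blast
  show ?thesis
  proof (rule ccontr)
    assume "Nn \<rho> \<noteq> Nn \<rho>'"
    hence "Nn \<rho> < Nn \<rho>' \<or> Nn \<rho>' < Nn \<rho>" by linarith
    thus False
    proof
      assume h: "Nn \<rho> < Nn \<rho>'"
      have "V (nat (Nn \<rho>)) > 0" using V_pos[OF assms(2)] h a by simp
      thus False using V_at_N[OF assms(1)] by simp
    next
      assume h: "Nn \<rho>' < Nn \<rho>"
      have "V (nat (Nn \<rho>')) > 0" using V_pos[OF assms(1)] h b by simp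
      thus False using V_at_N[OF assms(2)] by simp
    qed
  qed
qed

definition Phi :: "int list \<Rightarrow> real \<Rightarrow> real" where
  "Phi \<rho> l = sum_list (map (\<lambda>r. psi (l * of_int r)) \<rho>)"

lemma fact1:
  assumes "realizes V \<rho>" "2 * int k \<le> sqn \<rho>"
  shows "real (V k) - l * (of_int (Nn \<rho>) - of_nat k) \<ge> Phi \<rho> l"
proof -
  obtain c where c: "c \<in> Char (length \<rho>)" "\<bar>ip c \<rho>\<bar> = sqn \<rho> - 2 * int k"
    "8 * int (V k) = sqn c - int (length \<rho>)" using realizesD(1)[OF assms] by blast
  define c' where "c' = (if ip c \<rho> \<ge> 0 then c else map uminus c)"
  have lc: "length c = length \<rho>" "\<forall>x\<in>set c. odd x" using c(1) by (auto simp: Char_def)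
  have lc': "length c' = length \<rho>" "\<forall>x\<in>set c'. odd x" using lc by (auto simp: c'_def)
  have ip': "ip c' \<rho> = sqn \<rho> - 2 * int k" using c(2) by (auto simp: c'_def ip_neg)
  have sq': "sqn c' = sqn c" by (auto simp: c'_def sqn_neg)
  have L: "(of_int (sqn c') - of_nat (length \<rho>))/8 - l*(of_int (ip c' \<rho>) - of_int (sum_list \<rho>))/2
     \<ge> Phi \<rho> l" using list_lb[OF lc'] unfolding Phi_def .
  have e1: "of_int (sqn c') - of_nat (length \<rho>) = (8 * real (V k) :: real)"
  proof -
    have "real_of_int (sqn c' - int (length \<rho>)) = real_of_int (8 * int (V k))" using c(3) sq' by simp
    thus ?thesis by simp
  qed
  have e2: "of_int (ip c' \<rho>) - of_int (sum_list \<rho>) = (2 * (of_int (Nn \<rho>) - of_nat k) :: real)"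
  proof -
    have "ip c' \<rho> - sum_list \<rho> = 2 * (Nn \<rho> - int k)" using ip' Nn_eq[of \<rho>] by simp
    hence "real_of_int (ip c' \<rho> - sum_list \<rho>) = real_of_int (2 * (Nn \<rho> - int k))" by (simp only:)
    thus ?thesis by simp
  qed
  have h: "l * (2 * (a - b))/2 = l*(a - b)" for a b :: real by (simp add: field_simps)
  show ?thesis using L unfolding e1 e2 h by simp
qed

lemma ip_map: "ip (map f \<rho>) \<rho> = sum_list (map (\<lambda>r. f r * r) \<rho>)"
  by (induction \<rho>) auto

lemma fact2:
  assumes "realizes V \<rho>" "0 \<le> l" "l < 1/2"
  shows "\<exists>k. int k \<le> Nn \<rho> \<and> real (V k) - l * (of_int (Nn \<rho>) - of_nat k) \<le> Phi \<rho> l"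
proof -
  have nn: "\<forall>x\<in>set \<rho>. 0 \<le> x" using assms realizes_def by blast
  define f where "f = (\<lambda>r::int. \<lfloor>l * of_int r\<rfloor>)"
  define c where "c = map (\<lambda>r. 2*f r+1) \<rho>"
  define m where "m = sum_list (map (\<lambda>r. f r * r) \<rho>)"
  have pel: "0 \<le> f r * r \<and> 2 * (f r * r) \<le> r*r - r" if "r \<in> set \<rho>" for r
  proof -
    have r0: "0 \<le> r" using nn that by auto
    have f0: "0 \<le> f r" unfolding f_def using r0 assms(2) by simp
    have "2 * (f r * r) \<le> r*r - r"
    proof (cases "r = 0")
      case True thus ?thesis by simp
    next
      case False
      have "real_of_int (f r) \<le> l * of_int r" unfolding f_def by linarith
      also have "\<dots> < of_int r / 2" using assms(3) False r0 by simp
      finally have "2 * f r < r" by linarith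
      hence "2 * f r \<le> r - 1" by simp
      hence "(2 * f r) * r \<le> (r - 1) * r" using r0 by (intro mult_right_mono) auto
      thus ?thesis by (simp add: algebra_simps)
    qed
    thus ?thesis using f0 r0 by simp
  qed
  have m0: "0 \<le> m" unfolding m_def by (rule sum_list_nonneg) (use pel in auto)
  have "2 * m = sum_list (map (\<lambda>r. 2 * (f r * r)) \<rho>)" unfolding m_def
    by (simp add: sum_list_const_mult)
  also have "\<dots> \<le> sum_list (map (\<lambda>r. r*r - r) \<rho>)" by (rule sum_list_mono) (use pel in auto)
  also have "\<dots> = sqn \<rho> - sum_list \<rho>" by (induction \<rho>) auto
  finally have mN: "m \<le> Nn \<rho>" using Nn_eq[of \<rho>] by simp
  have ipc: "ip c \<rho> = sum_list \<rho> + 2 * m" unfolding c_def ip_map m_def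
    by (induction \<rho>) (auto simp: algebra_simps)
  define k where "k = nat (Nn \<rho> - m)"
  have kN: "int k = Nn \<rho> - m" unfolding k_def using mN by simp
  have s0: "0 \<le> sum_list \<rho>" using sum_nonneg_list[OF nn] .
  have k2: "2 * int k \<le> sqn \<rho>" using kN m0 s0 Nn_eq[of \<rho>] by simp
  have cc: "c \<in> Char (length \<rho>)" unfolding c_def Char_def by auto
  have "\<bar>ip c \<rho>\<bar> = sqn \<rho> - 2 * int k" using ipc kN m0 s0 Nn_eq[of \<rho>] by simp
  from realizesD(2)[OF assms(1) k2 cc this]
  have Vk: "8 * int (V k) \<le> sqn c - int (length \<rho>)" .
  have E: "(of_int (sqn c) - of_nat (length \<rho>))/8 - l*(of_int (ip c \<rho>) - of_int (sum_list \<rho>))/2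
     = Phi \<rho> l" unfolding Phi_def c_def f_def by (rule list_eq)
  have A: "8 * real (V k) \<le> of_int (sqn c) - of_nat (length \<rho>)"
  proof -
    have "real_of_int (8 * int (V k)) \<le> real_of_int (sqn c - int (length \<rho>))" using Vk by (simp only: of_int_le_iff)
    thus ?thesis by simp
  qed
  have B: "of_int (ip c \<rho>) - of_int (sum_list \<rho>) = (2 * (of_int (Nn \<rho>) - of_nat k) :: real)"
  proof -
    have "ip c \<rho> - sum_list \<rho> = 2 * (Nn \<rho> - int k)" using ipc kN by simp
    hence "real_of_int (ip c \<rho> - sum_list \<rho>) = real_of_int (2 * (Nn \<rho> - int k))" by (simp only:)
    thus ?thesis by simp
  qed
  have h: "l * (2 * (a - b))/2 = l*(a - b)" for a b :: real by (simp add: field_simps)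
  have E2: "(of_int (sqn c) - of_nat (length \<rho>))/8 - l * (of_int (Nn \<rho>) - of_nat k) = Phi \<rho> l"
    using E unfolding B h .
  have "real (V k) - l * (of_int (Nn \<rho>) - of_nat k) \<le> Phi \<rho> l"
  proof -
    have gen: "\<And>X P Q W::real. 8*W \<le> X \<Longrightarrow> X/8 - P = Q \<Longrightarrow> W - P \<le> Q" by linarith
    show ?thesis by (rule gen[OF A E2])
  qed
  thus ?thesis using kN m0 by (intro exI[of _ k]) simp
qed

lemma Phi_eq:
  assumes "realizes V \<rho>" "realizes V \<rho>'" "0 \<le> l" "l < 1/2"
  shows "Phi \<rho> l = Phi \<rho>' l"
proof -
  have N: "Nn \<rho> = Nn \<rho>'" using N_eq[OF assms(1,2)] .
  have sr: "2 * Nn \<rho> \<le> sqn \<rho>" using Nn_eq[of \<rho>] sum_nonneg_list assms(1) realizes_def by force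
  have sr': "2 * Nn \<rho>' \<le> sqn \<rho>'" using Nn_eq[of \<rho>'] sum_nonneg_list assms(2) realizes_def by force
  obtain k where k: "int k \<le> Nn \<rho>" "real (V k) - l * (of_int (Nn \<rho>) - of_nat k) \<le> Phi \<rho> l"
    using fact2[OF assms(1,3,4)] by blast
  have "Phi \<rho>' l \<le> real (V k) - l * (of_int (Nn \<rho>') - of_nat k)"
    by (rule fact1[OF assms(2)]) (use k(1) N sr' in simp)
  hence a: "Phi \<rho>' l \<le> Phi \<rho> l" using k(2) N by simp
  obtain k' where k': "int k' \<le> Nn \<rho>'" "real (V k') - l * (of_int (Nn \<rho>') - of_nat k') \<le> Phi \<rho>' l"
    using fact2[OF assms(2,3,4)] by blast
  have "Phi \<rho> l \<le> real (V k') - l * (of_int (Nn \<rho>) - of_nat k')"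
    by (rule fact1[OF assms(1)]) (use k'(1) N sr in simp)
  hence "Phi \<rho> l \<le> Phi \<rho>' l" using k'(2) N by simp
  with a show ?thesis by simp
qed

lemma psi_zero: "0 \<le> \<mu> \<Longrightarrow> \<mu> < 1 \<Longrightarrow> psi \<mu> = 0"
proof -
  assume "0 \<le> \<mu>" "\<mu> < 1"
  hence "\<lfloor>\<mu>\<rfloor> = 0" by linarith
  thus ?thesis by (simp add: psi_def)
qed

lemma psi_nonpos: "0 \<le> \<mu> \<Longrightarrow> psi \<mu> \<le> 0"
proof -
  assume a: "0 \<le> \<mu>"
  define j where "j = \<lfloor>\<mu>\<rfloor>"
  have j0: "0 \<le> j" unfolding j_def using a by simp
  have jm: "real_of_int j \<le> \<mu>" unfolding j_def by linarith
  have "real_of_int j * of_int j \<le> \<mu> * of_int j" using jm j0 by (intro mult_right_mono) auto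
  moreover have "real_of_int j * (of_int j + 1) / 2 \<le> of_int j * of_int j"
  proof (cases "j = 0")
    case True thus ?thesis by simp
  next
    case False hence "real_of_int j \<ge> 1" using j0 by simp
    hence "real_of_int j * (of_int j + 1) \<le> of_int j * (2 * of_int j)" 
      by (intro mult_left_mono) auto
    thus ?thesis by simp
  qed
  ultimately show ?thesis unfolding psi_def j_def[symmetric] by linarith
qed

lemma psi_neg: "1 < \<mu> \<Longrightarrow> \<mu> < 2 \<Longrightarrow> psi \<mu> < 0"
proof -
  assume "1 < \<mu>" "\<mu> < 2"
  moreover hence "\<lfloor>\<mu>\<rfloor> = 1" by linarith
  ultimately show ?thesis by (simp add: psi_def)
qed

lemma sum_mset_nonpos_psi:
  "\<forall>x\<in>#A. 0 \<le> x \<Longrightarrow> 0 \<le> l \<Longrightarrow> (\<Sum>x\<in>#A. psi (l * of_int x)) \<le> 0"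
  by (induction A) (auto intro!: add_nonpos_nonpos psi_nonpos)

lemma sum_mset_zero_psi:
  "\<forall>x\<in>#A. 0 \<le> l * of_int x \<and> l * of_int x < 1 \<Longrightarrow> (\<Sum>x\<in>#A. psi (l * of_int x)) = 0"
  by (induction A) (auto simp: psi_zero)

lemma separate:
  fixes M :: int
  assumes "M \<in># A" "3 \<le> M" "\<forall>x\<in>#A. 0 \<le> x" "\<forall>x\<in>#B. 0 \<le> x \<and> x < M"
  shows "\<exists>l::real. 0 \<le> l \<and> l < 1/2 \<and> (\<Sum>x\<in>#A. psi (l * of_int x)) \<noteq> (\<Sum>x\<in>#B. psi (l * of_int x))"
proof -
  define m where "m = real_of_int M"
  have m3: "3 \<le> m" using assms(2) unfolding m_def by simp
  define l where "l = (2*m+1)/(2*m*m)"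
  have l0: "0 \<le> l" unfolding l_def using m3 by simp
  have mm: "3 * m \<le> m * m" using m3 by (intro mult_right_mono) auto
  have mm2: "2 + m * 4 < m * (m * 2)" 
  proof -
    have "m * (m * 2) = 2 * (m * m)" by simp
    thus ?thesis using mm m3 by linarith
  qed
  have lh: "l < 1/2" unfolding l_def using m3 mm2 by (simp add: field_simps)
  have lm: "l * m = 1 + 1/(2*m)" unfolding l_def using m3 by (simp add: field_simps)
  have lm1: "1 < l*m" "l * m < 2" unfolding lm using m3 by (auto simp: field_simps)
  have lB: "0 \<le> l * of_int x \<and> l * of_int x < 1" if "x \<in># B" for x
  proof -
    have "0 \<le> x" "x \<le> M - 1" using assms(4) that by auto
    hence x: "0 \<le> real_of_int x" "real_of_int x \<le> m - 1" unfolding m_def by auto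
    have "l * of_int x \<le> l * (m - 1)" using x l0 by (intro mult_left_mono) auto
    also have "l * (m - 1) < 1" unfolding l_def using m3 by (simp add: field_simps)
    finally show ?thesis using x l0 by simp
  qed
  have B0: "(\<Sum>x\<in>#B. psi (l * of_int x)) = 0" using lB by (intro sum_mset_zero_psi) auto
  obtain A' where A': "A = add_mset M A'" using assms(1) by (metis insert_DiffM)
  have "(\<Sum>x\<in>#A. psi (l * of_int x)) = psi (l*m) + (\<Sum>x\<in>#A'. psi (l * of_int x))"
    unfolding A' m_def by simp
  also have "\<dots> < 0" using psi_neg[OF lm1] sum_mset_nonpos_psi[of A' l] assms(3) l0 A' by auto
  finally show ?thesis using B0 l0 lh by (intro exI[of _ l]) auto
qed

lemma mset_det:
  fixes A B :: "int multiset"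
  assumes "\<forall>x\<in>#A. 3 \<le> x" "\<forall>x\<in>#B. 3 \<le> x"
    "\<forall>l::real. 0 \<le> l \<and> l < 1/2 \<longrightarrow> (\<Sum>x\<in>#A. psi (l * of_int x)) = (\<Sum>x\<in>#B. psi (l * of_int x))"
  shows "A = B"
  using assms
proof (induction "size A + size B" arbitrary: A B rule: less_induct)
  case less
  show ?case
  proof (cases "A + B = {#}")
    case True thus ?thesis by simp
  next
    case False
    define M where "M = Max (set_mset (A + B))"
    have fin: "finite (set_mset (A + B))" by simp
    have Min: "M \<in># A + B" unfolding M_def using False
      by (metis Max_in fin set_mset_eq_empty_iff)
    have Mge: "\<forall>x\<in>#A + B. x \<le> M" unfolding M_def using fin by auto
    show ?thesis
    proof (cases "M \<in># A \<and> M \<in># B")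
      case True
      obtain A' where A': "A = add_mset M A'" using True by (metis insert_DiffM)
      obtain B' where B': "B = add_mset M B'" using True by (metis insert_DiffM)
      have "A' = B'"
      proof (rule less.hyps)
        show "size A' + size B' < size A + size B" using A' B' by simp
        show "\<forall>x\<in>#A'. 3 \<le> x" "\<forall>x\<in>#B'. 3 \<le> x" using less.prems A' B' by auto
        show "\<forall>l::real. 0 \<le> l \<and> l < 1/2 \<longrightarrow> (\<Sum>x\<in>#A'. psi (l * of_int x)) = (\<Sum>x\<in>#B'. psi (l * of_int x))"
          using less.prems(3) unfolding A' B' by simp
      qed
      thus ?thesis using A' B' by simp
    next
      case False
      show ?thesis
      proof (cases "M \<in># A")
        case True
        with False have "M \<notin># B" by simp
        hence "\<forall>x\<in>#B. 0 \<le> x \<and> x < M" using Mge less.prems(2) by (auto simp: order.order_iff_strict) 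
        from separate[OF True _ _ this] less.prems True show ?thesis by force
      next
        case False
        hence MB: "M \<in># B" using Min by simp
        hence "\<forall>x\<in>#A. 0 \<le> x \<and> x < M" using Mge less.prems(1) False by (auto simp: order.order_iff_strict)
        from separate[OF MB _ _ this] less.prems MB show ?thesis by force
      qed
    qed
  qed
qed

lemma sum_part: "(\<Sum>x\<in>#M. f x) = (\<Sum>x\<in>#filter_mset P M. f x) + (\<Sum>x\<in>#filter_mset (\<lambda>x. \<not> P x) M. (f x :: 'b::comm_monoid_add))"
  by (induction M) (auto simp: algebra_simps)

lemma Phi_mset: "Phi \<rho> l = (\<Sum>x\<in># mset \<rho>. psi (l * of_int x))"
  unfolding Phi_def by (simp add: sum_mset_sum_list[symmetric])

lemma Phi_big:
  assumes "\<forall>x\<in>set \<rho>. 0 \<le> x" "0 \<le> l" "l < 1/2"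
  shows "Phi \<rho> l = (\<Sum>x\<in># filter_mset (\<lambda>x. 3 \<le> x) (mset \<rho>). psi (l * of_int x))"
proof -
  have "Phi \<rho> l = (\<Sum>x\<in># filter_mset (\<lambda>x. 3 \<le> x) (mset \<rho>). psi (l * of_int x))
     + (\<Sum>x\<in># filter_mset (\<lambda>x. \<not> 3 \<le> x) (mset \<rho>). psi (l * of_int x))"
    unfolding Phi_mset by (rule sum_part)
  moreover have "(\<Sum>x\<in># filter_mset (\<lambda>x. \<not> 3 \<le> x) (mset \<rho>). psi (l * of_int x)) = 0"
  proof (rule sum_mset_zero_psi, rule ballI)
    fix x assume "x \<in># filter_mset (\<lambda>x. \<not> 3 \<le> x) (mset \<rho>)"
    hence x: "0 \<le> x" "x \<le> 2" using assms(1) by auto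
    hence "0 \<le> real_of_int x" "real_of_int x \<le> 2" by auto
    moreover have "l * of_int x \<le> l * 2" using x assms(2) by (intro mult_left_mono) auto
    ultimately show "0 \<le> l * of_int x \<and> l * of_int x < 1" using assms by auto
  qed
  ultimately show ?thesis by simp
qed

lemma sum0: "\<forall>x\<in>#A. f x = (0::int) \<Longrightarrow> (\<Sum>x\<in>#A. f x) = 0"
  by (induction A) auto

lemma Nn_mset: "Nn \<rho> = (\<Sum>x\<in># mset \<rho>. x*(x-1) div 2)"
  unfolding Nn_def by (simp add: sum_mset_sum_list[symmetric])

lemma Nn_split:
  assumes "\<forall>x\<in>set \<rho>. 0 \<le> x"
  shows "Nn \<rho> = (\<Sum>x\<in># filter_mset (\<lambda>x. 3 \<le> x) (mset \<rho>). x*(x-1) div 2) + int (count (mset \<rho>) 2)"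
proof -
  let ?h = "\<lambda>x::int. x*(x-1) div 2"
  let ?M = "mset \<rho>"
  let ?R = "filter_mset (\<lambda>x. \<not> 3 \<le> x) ?M"
  have 1: "Nn \<rho> = (\<Sum>x\<in># filter_mset (\<lambda>x. 3 \<le> x) ?M. ?h x) + (\<Sum>x\<in># ?R. ?h x)"
    unfolding Nn_mset by (rule sum_part)
  have 2: "(\<Sum>x\<in># ?R. ?h x) = (\<Sum>x\<in># filter_mset (\<lambda>x. x = 2) ?R. ?h x)
     + (\<Sum>x\<in># filter_mset (\<lambda>x. \<not> x = 2) ?R. ?h x)" by (rule sum_part)
  have e: "filter_mset (\<lambda>x. x = 2) ?R = replicate_mset (count ?M 2) 2" by (rule multiset_eqI) auto
  have 3: "(\<Sum>x\<in># filter_mset (\<lambda>x. x = 2) ?R. ?h x) = int (count ?M 2)" unfolding e by simp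
  have 4: "(\<Sum>x\<in># filter_mset (\<lambda>x. \<not> x = 2) ?R. ?h x) = 0"
  proof (rule sum0, rule ballI)
    fix x assume "x \<in># filter_mset (\<lambda>x. \<not> x = 2) ?R"
    hence "x = 0 \<or> x = 1" using assms by auto
    thus "?h x = 0" by auto
  qed
  show ?thesis using 1 2 3 4 by simp
qed

theorem theorem2p26:
  fixes V :: "nat \<Rightarrow> nat" and \<rho> \<rho>' :: "int list"
  assumes "\<And>i. V (Suc i) \<le> V i" and "\<And>i. V i \<le> V (Suc i) + 1"
    and "realizes V \<rho>" and "realizes V \<rho>'"
  shows "filter_mset (\<lambda>x. 2 \<le> x) (mset \<rho>) = filter_mset (\<lambda>x. 2 \<le> x) (mset \<rho>')"
proof -
  have nn: "\<forall>x\<in>set \<rho>. 0 \<le> x" using assms(3) realizes_def by blast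
  have nn': "\<forall>x\<in>set \<rho>'. 0 \<le> x" using assms(4) realizes_def by blast
  have A: "filter_mset (\<lambda>x. 3 \<le> x) (mset \<rho>) = filter_mset (\<lambda>x. 3 \<le> x) (mset \<rho>')"
  proof (rule mset_det)
    show "\<forall>l::real. 0 \<le> l \<and> l < 1/2 \<longrightarrow> (\<Sum>x\<in>#filter_mset (\<lambda>x. 3 \<le> x) (mset \<rho>). psi (l * of_int x))
        = (\<Sum>x\<in>#filter_mset (\<lambda>x. 3 \<le> x) (mset \<rho>'). psi (l * of_int x))"
      using Phi_eq[OF assms(3,4)] Phi_big[OF nn] Phi_big[OF nn'] by auto
  qed auto
  have "Nn \<rho> = Nn \<rho>'" using N_eq[OF assms(3,4)] .
  hence C: "count (mset \<rho>) 2 = count (mset \<rho>') 2" using Nn_split[OF nn] Nn_split[OF nn'] A by simp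
  have split: "filter_mset (\<lambda>x. 2 \<le> x) M = filter_mset (\<lambda>x. 3 \<le> x) M + filter_mset (\<lambda>x. x = 2) M" for M :: "int multiset"
    by (rule multiset_eqI) auto
  show ?thesis unfolding split A by (simp add: filter_eq_replicate_mset C)
qed

end
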